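(* Let $G$ be a graph, $D\ge1$, and $e_1,\dots,e_r$ edges of $G$ with masses $m_{e_1},\dots,m_{e_r}$ all nonzero. If for some choice of constants $c_{e_1},\dots,c_{e_r}\in\mathbb C^D$ the intersection of quadrics $Q_{e_1}\cap\cdots\cap Q_{e_r}\subset H_1(G,\mathbb C^D)$ has a pinch point (a point of the intersection at which the differentials of the $r$ defining functions are linearly dependent), then the graph obtained from $G$ by cutting (deleting) the edges $e_1,\dots,e_r$ is disconnected.
   Context: Fix a nondegenerate symmetric bilinear form on $\mathbb C^D$ (the complexified Minkowski form), writing $v^2$ for the square of $v\in\mathbb C^D$. For an edge $e$, $e^\vee:H_1(G,\mathbb C^D)\to\mathbb C^D$ is the composite of the inclusion $H_1(G,\mathbb C^D)\subset(\mathbb C^D)^E$ with the $e$-th projection. For $c_e\in\mathbb C^D$ and a mass $m_e\in\mathbb C$, the propagator quadric is $Q_e=\{x\in H_1(G,\mathbb C^D)\mid (e^\vee(x)-c_e)^2-m_e^2=0\}$. *)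

theory Defs
  imports "HOL-Analysis.Analysis"
begin

text \<open>The vector space C^D is complex^'d for a finite type 'd (so D = CARD('d) \<ge> 1).
  A graph is given by a finite vertex set V, a finite edge set E and an (arbitrary)
  orientation src/tgt of each edge; loops and multiple edges are allowed.\<close>

definition is_graph :: "'v set \<Rightarrow> 'e set \<Rightarrow> ('e \<Rightarrow> 'v) \<Rightarrow> ('e \<Rightarrow> 'v) \<Rightarrow> bool" where
  "is_graph V E src tgt \<longleftrightarrow> finite V \<and> finite E \<and> (\<forall>e\<in>E. src e \<in> V \<and> tgt e \<in> V)"

definition nondeg_sym_bilinear :: "(complex^'d \<Rightarrow> complex^'d \<Rightarrow> complex) \<Rightarrow> bool" where
  "nondeg_sym_bilinear B \<longleftrightarrow>
     (\<forall>x y z. B (x + y) z = B x z + B y z) \<and>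
     (\<forall>a x z. B (a *s x) z = a * B x z) \<and>
     (\<forall>x y. B x y = B y x) \<and>
     (\<forall>x. (\<forall>y. B x y = 0) \<longrightarrow> x = 0)"

text \<open>The edge functional e^\<or> is evaluation x \<mapsto> x e.\<close>
definition H1 :: "'v set \<Rightarrow> 'e set \<Rightarrow> ('e \<Rightarrow> 'v) \<Rightarrow> ('e \<Rightarrow> 'v) \<Rightarrow> ('e \<Rightarrow> complex^'d) set" where
  "H1 V E src tgt = {x. (\<forall>e. e \<notin> E \<longrightarrow> x e = 0) \<and>
      (\<forall>v\<in>V. (\<Sum>e\<in>{e\<in>E. tgt e = v}. x e) - (\<Sum>e\<in>{e\<in>E. src e = v}. x e) = 0)}"

text \<open>The defining function of the propagator quadric Q_e: x \<mapsto> (e^\<or>(x) - c_e)^2 - m_e^2.\<close>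
definition prop_fun :: "(complex^'d \<Rightarrow> complex^'d \<Rightarrow> complex) \<Rightarrow> 'e \<Rightarrow> complex^'d \<Rightarrow> complex
                       \<Rightarrow> ('e \<Rightarrow> complex^'d) \<Rightarrow> complex" where
  "prop_fun B e ce me x = B (x e - ce) (x e - ce) - me ^ 2"

definition quadric :: "'v set \<Rightarrow> 'e set \<Rightarrow> ('e \<Rightarrow> 'v) \<Rightarrow> ('e \<Rightarrow> 'v) \<Rightarrow>
    (complex^'d \<Rightarrow> complex^'d \<Rightarrow> complex) \<Rightarrow> 'e \<Rightarrow> complex^'d \<Rightarrow> complex \<Rightarrow> ('e \<Rightarrow> complex^'d) set" where
  "quadric V E src tgt B e ce me = {x \<in> H1 V E src tgt. prop_fun B e ce me x = 0}"

definition differential :: "(('e \<Rightarrow> complex^'d) \<Rightarrow> complex) \<Rightarrow> ('e \<Rightarrow> complex^'d) \<Rightarrow> ('e \<Rightarrow> complex^'d) \<Rightarrow> complex" where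
  "differential f x y = deriv (\<lambda>t::complex. f (\<lambda>e. x e + t *s y e)) 0"

definition pinch_point :: "'v set \<Rightarrow> 'e set \<Rightarrow> ('e \<Rightarrow> 'v) \<Rightarrow> ('e \<Rightarrow> 'v) \<Rightarrow>
    (complex^'d \<Rightarrow> complex^'d \<Rightarrow> complex) \<Rightarrow> 'e set \<Rightarrow> ('e \<Rightarrow> complex^'d) \<Rightarrow> ('e \<Rightarrow> complex)
    \<Rightarrow> ('e \<Rightarrow> complex^'d) \<Rightarrow> bool" where
  "pinch_point V E src tgt B S c m x \<longleftrightarrow>
     x \<in> (\<Inter>e\<in>S. quadric V E src tgt B e (c e) (m e)) \<and> x \<in> H1 V E src tgt \<and>
     (\<exists>lam::'e \<Rightarrow> complex. (\<exists>e\<in>S. lam e \<noteq> 0) \<and>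
        (\<forall>y\<in>H1 V E src tgt. (\<Sum>e\<in>S. lam e * differential (prop_fun B e (c e) (m e)) x y) = 0))"

definition adj_rel :: "'e set \<Rightarrow> ('e \<Rightarrow> 'v) \<Rightarrow> ('e \<Rightarrow> 'v) \<Rightarrow> ('v \<times> 'v) set" where
  "adj_rel E src tgt = {(src e, tgt e) | e. e \<in> E} \<union> {(tgt e, src e) | e. e \<in> E}"

definition graph_connected :: "'v set \<Rightarrow> 'e set \<Rightarrow> ('e \<Rightarrow> 'v) \<Rightarrow> ('e \<Rightarrow> 'v) \<Rightarrow> bool" where
  "graph_connected V E src tgt \<longleftrightarrow> (\<forall>u\<in>V. \<forall>v\<in>V. (u, v) \<in> (adj_rel E src tgt)\<^sup>*)"

end

theory Submission
  imports Defs
begin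

definition bd :: "'e set \<Rightarrow> ('e \<Rightarrow> 'v) \<Rightarrow> ('e \<Rightarrow> 'v) \<Rightarrow> ('e \<Rightarrow> complex^'d) \<Rightarrow> 'v \<Rightarrow> complex^'d" where
  "bd E src tgt z v = (\<Sum>e\<in>{e\<in>E. tgt e = v}. z e) - (\<Sum>e\<in>{e\<in>E. src e = v}. z e)"

lemma bd_add: "bd E src tgt (\<lambda>e. z1 e + z2 e) v = bd E src tgt z1 v + bd E src tgt z2 v"
  unfolding bd_def by (simp add: sum.distrib)

lemma bd_single: "finite E \<Longrightarrow> f \<in> E \<Longrightarrow>
   bd E src tgt (\<lambda>e. if e = f then a else 0) v = (if v = tgt f then a else 0) - (if v = src f then a else 0)"
  unfolding bd_def by (auto simp: sum.delta)

lemma path_chain: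
  assumes "(u,w) \<in> (adj_rel F src tgt)\<^sup>*" "F \<subseteq> E" "finite E"
  shows "\<exists>z. (\<forall>e. e \<notin> F \<longrightarrow> z e = 0) \<and>
     (\<forall>v. bd E src tgt z v = (if v = w then a else 0) - (if v = u then a else 0))"
  using assms(1)
proof (induction rule: rtrancl_induct)
  case base
  show ?case by (rule exI[of _ "\<lambda>e. 0"]) (simp add: bd_def)
next
  case (step w w')
  then obtain z where z: "\<forall>e. e \<notin> F \<longrightarrow> z e = 0"
    "\<forall>v. bd E src tgt z v = (if v = w then a else 0) - (if v = u then a else 0)" by blast
  from step(2) obtain f b where f: "f \<in> F" and
     fb: "(w = src f \<and> w' = tgt f \<and> b = a) \<or> (w = tgt f \<and> w' = src f \<and> b = -a)"
    unfolding adj_rel_def by blast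
  have fE: "f \<in> E" using f assms by blast
  define z' where "z' = (\<lambda>e. z e + (if e = f then b else 0))"
  have "\<forall>e. e \<notin> F \<longrightarrow> z' e = 0" using z f unfolding z'_def by auto
  moreover have "\<forall>v. bd E src tgt z' v = (if v = w' then a else 0) - (if v = u then a else 0)"
  proof
    fix v
    have "bd E src tgt z' v = bd E src tgt z v + ((if v = tgt f then b else 0) - (if v = src f then b else 0))"
      unfolding z'_def bd_add bd_single[OF assms(3) fE] ..
    then show "bd E src tgt z' v = (if v = w' then a else 0) - (if v = u then a else 0)"
      using z(2) fb by (auto simp: algebra_simps)
  qed
  ultimately show ?case by blast
qed

lemma B_lin:
  assumes "nondeg_sym_bilinear B"
  shows "B (x + y) z = B x z + B y z" "B (a *s x) z = a * B x z" "B x y = B y x"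
    "B z (x + y) = B z x + B z y" "B z (a *s x) = a * B z x"
    "B (x - y) z = B x z - B y z" "B 0 z = 0" "B z 0 = 0"
proof -
  show 1: "B (x + y) z = B x z + B y z" and 2: "B (a *s x) z = a * B x z" and 3: "B x y = B y x"
    using assms unfolding nondeg_sym_bilinear_def by auto
  show "B z (x + y) = B z x + B z y" "B z (a *s x) = a * B z x"
    using assms unfolding nondeg_sym_bilinear_def by metis+
  have "x - y = x + (-1::complex) *s y" by (simp add: vec_eq_iff)
  have A: "\<And>x y z. B (x + y) z = B x z + B y z" and Sc: "\<And>a x z. B (a *s x) z = a * B x z"
    using assms unfolding nondeg_sym_bilinear_def by auto
  from \<open>x - y = _\<close> show "B (x - y) z = B x z - B y z"
    using A[of x "(-1) *s y" z] Sc[of "-1" y z] by simp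
  have "(0::complex^'a) = (0::complex) *s x" by (simp add: vec_eq_iff)
  then show "B 0 z = 0" using Sc[of 0 x z] by simp
  have Sy: "\<And>x y. B x y = B y x" using assms unfolding nondeg_sym_bilinear_def by blast
  show "B z 0 = 0" using Sy[of z 0] \<open>B 0 z = 0\<close> by simp
qed

lemma differential_prop:
  assumes "nondeg_sym_bilinear B"
  shows "differential (prop_fun B e ce me) x y = 2 * B (x e - ce) (y e)"
proof -
  define p where "p = x e - ce"
  define q where "q = y e"
  have eq: "(\<lambda>t::complex. prop_fun B e ce me (\<lambda>e. x e + t *s y e)) =
        (\<lambda>t. B p p + 2 * t * B p q + t^2 * B q q - me^2)"
  proof
    fix t :: complex
    have "x e + t *s y e - ce = p + t *s q" unfolding p_def q_def by (simp add: algebra_simps)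
    then show "prop_fun B e ce me (\<lambda>e. x e + t *s y e) = B p p + 2 * t * B p q + t^2 * B q q - me^2"
      unfolding prop_fun_def using B_lin[OF assms]
      by (simp add: algebra_simps power2_eq_square)
  qed
  have "((\<lambda>t. B p p + 2 * t * B p q + t^2 * B q q - me^2) has_field_derivative 2 * B p q) (at 0)"
    by (auto intro!: derivative_eq_intros)
  then show ?thesis unfolding differential_def eq p_def q_def by (rule DERIV_imp_deriv)
qed

theorem proposition10p1:
  fixes V :: "'v set" and E :: "'e set" and src tgt :: "'e \<Rightarrow> 'v"
    and B :: "complex^'d \<Rightarrow> complex^'d \<Rightarrow> complex"
    and S :: "'e set" and c :: "'e \<Rightarrow> complex^'d" and m :: "'e \<Rightarrow> complex"
  assumes "is_graph V E src tgt"
    and "nondeg_sym_bilinear B"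
    and "S \<subseteq> E"
    and "\<forall>e\<in>S. m e \<noteq> 0"
    and "\<exists>x. pinch_point V E src tgt B S c m x"
  shows "\<not> graph_connected V (E - S) src tgt"
proof
  assume conn: "graph_connected V (E - S) src tgt"
  obtain x lam where xq: "x \<in> (\<Inter>e\<in>S. quadric V E src tgt B e (c e) (m e))"
    and ex: "\<exists>e\<in>S. lam e \<noteq> 0"
    and dep: "\<forall>y\<in>H1 V E src tgt. (\<Sum>e\<in>S. lam e * differential (prop_fun B e (c e) (m e)) x y) = 0"
    using assms(5) unfolding pinch_point_def by blast
  from ex obtain e where eS: "e \<in> S" and le: "lam e \<noteq> 0" by blast
  have finE: "finite E" and sV: "src e \<in> V" and tV: "tgt e \<in> V"
    using assms(1,3) eS unfolding is_graph_def by auto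
  have finS: "finite S" using finE assms(3) finite_subset by blast
  have eE: "e \<in> E" using eS assms(3) by blast
  have Bz: "B (x e - c e) a = 0" for a
  proof -
    have "(tgt e, src e) \<in> (adj_rel (E - S) src tgt)\<^sup>*"
      using conn sV tV unfolding graph_connected_def by blast
    from path_chain[OF this _ finE, of a] obtain z where
      z: "\<forall>e'. e' \<notin> E - S \<longrightarrow> z e' = 0"
      "\<forall>v. bd E src tgt z v = (if v = src e then a else 0) - (if v = tgt e then a else 0)"
      by blast
    define y where "y = (\<lambda>e'. z e' + (if e' = e then a else 0))"
    have yH: "y \<in> H1 V E src tgt"
    proof -
      have "\<forall>e'. e' \<notin> E \<longrightarrow> y e' = 0" using z(1) eE unfolding y_def by auto
      moreover have "bd E src tgt y v = 0" for v
        unfolding y_def bd_add bd_single[OF finE eE] using z(2) by simp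
      ultimately show ?thesis unfolding H1_def bd_def by auto
    qed
    have yS: "e' \<in> S \<Longrightarrow> y e' = (if e' = e then a else 0)" for e'
      using z(1) unfolding y_def by auto
    have "(\<Sum>e'\<in>S. lam e' * differential (prop_fun B e' (c e') (m e')) x y)
          = (\<Sum>e'\<in>S. if e' = e then lam e * (2 * B (x e - c e) a) else 0)"
      by (rule sum.cong) (auto simp: differential_prop[OF assms(2)] yS B_lin(8)[OF assms(2)])
    also have "\<dots> = lam e * (2 * B (x e - c e) a)" using finS eS by simp
    finally show ?thesis using dep yH le by simp
  qed
  have "x e - c e = 0"
    using assms(2) Bz unfolding nondeg_sym_bilinear_def by blast
  moreover have "prop_fun B e (c e) (m e) x = 0" using xq eS unfolding quadric_def by blast
  ultimately have "m e ^ 2 = 0" unfolding prop_fun_def using B_lin(7)[OF assms(2)] by simp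
  then show False using assms(4) eS by simp
qed

end
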